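(* Let $p$ be an odd prime with $p\equiv 1\pmod 4$, and let $B$ be a perfect $B[-1,3](p)$ set. If $i\in B$, then $6i\in B$ or $-6i\in B$ (computed modulo $p$).
   Context: A set $B\subseteq\mathbb{Z}_p$ is a perfect $B[-1,3](p)$ set if every nonzero element of $\mathbb{Z}_p$ has a unique representation $ab \bmod p$ with $a\in\{-1,1,2,3\}$ and $b\in B$ (and $0$ has no such representation); equivalently $B\subseteq\mathbb{Z}_p^\ast$, $|B|=(p-1)/4$, and the sets $\{-b,b,2b,3b\}$, $b\in B$, partition $\mathbb{Z}_p^\ast=\mathbb{Z}_p\setminus\{0\}$. *)

theory Defs
  imports "HOL-Computational_Algebra.Primes"
begin

text \<open>Elements of Z_p are represented by their canonical residues in {0..<p} (as integers).\<close>

definition perfect_B13 :: "nat \<Rightarrow> int set \<Rightarrow> bool" where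
  "perfect_B13 p B \<longleftrightarrow>
     B \<subseteq> {0..<int p} \<and>
     (\<forall>x \<in> {1..<int p}. \<exists>!ab. fst ab \<in> {-1,1,2,3} \<and> snd ab \<in> B \<and> (fst ab * snd ab) mod int p = x) \<and>
     \<not> (\<exists>a \<in> {-1,1,2,3::int}. \<exists>b \<in> B. (a * b) mod int p = 0)"

end

theory Submission
  imports Defs "HOL-Number_Theory.Cong"
begin

lemma ex1_uniq: "\<exists>!x. P x \<Longrightarrow> P a \<Longrightarrow> P b \<Longrightarrow> a = b" by blast

lemma cancel_aux:
  fixes c b d :: int and p :: nat
  assumes "coprime c (int p)" "(c*b) mod int p = (c*d) mod int p" "b \<in> {0..<int p}"
  shows "b = d mod int p"
proof -
  have "[c*b = c*d] (mod int p)" using assms(2) by (simp add: cong_def)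
  hence "[b = d] (mod int p)" using cong_mult_lcancel[OF assms(1)] by simp
  hence "b mod int p = d mod int p" by (simp add: cong_def)
  thus ?thesis using assms(3) by simp
qed

theorem lemma4p4:
  fixes p :: nat and B :: "int set" and i :: int
  assumes "prime p" and "odd p" and "p mod 4 = 1"
    and "perfect_B13 p B"
    and "i \<in> B"
  shows "(6 * i) mod int p \<in> B \<or> (- 6 * i) mod int p \<in> B"
proof -
  note H = assms(4)[unfolded perfect_B13_def]
  note sub = H[THEN conjunct1]
  note uniq = H[THEN conjunct2, THEN conjunct1]
  note nz = H[THEN conjunct2, THEN conjunct2]
  have pp: "prime (int p)" using assms(1) by simp
  have p0: "int p > 1" using assms(1) prime_gt_1_nat by fastforce
  have c2: "coprime 2 (int p)"
  proof -
    have n2: "\<not> int p dvd 2"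
    proof
      assume "int p dvd 2"
      hence "p dvd 2" using int_dvd_int_iff[of p 2] by simp
      hence "p \<le> 2" by (simp add: dvd_imp_le)
      hence "p = 2" using p0 by linarith
      thus False using assms(2) by simp
    qed
    show ?thesis using coprime_commute[THEN iffD1, OF prime_imp_coprime[OF pp n2]] by simp
  qed
  have n2': "\<not> int p dvd 2"
  proof
    assume "int p dvd 2"
    hence "p dvd 2" using int_dvd_int_iff[of p 2] by simp
    hence "p \<le> 2" by (simp add: dvd_imp_le)
    hence "p = 2" using p0 by linarith
      thus False using assms(2) by simp
  qed
  have dummy: True
  proof -
    show ?thesis by simp
  qed
  have c3: "coprime 3 (int p)"
  proof -
    have "p \<noteq> 3" proof assume "p = 3" with assms(3) show False by simp qed
    have "\<not> int p dvd 3"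
    proof
      assume "int p dvd 3"
      hence "p dvd 3" using int_dvd_int_iff[of p 3] by simp
      hence "p \<le> 3" by (simp add: dvd_imp_le)
      moreover have "p \<noteq> 2" proof assume "p = 2" with assms(2) show False by simp qed
      ultimately show False using p0 \<open>p \<noteq> 3\<close> by linarith
    qed
    thus ?thesis using coprime_commute[THEN iffD1, OF prime_imp_coprime[OF pp]] by simp
  qed
  have nz': "\<And>a b. a \<in> {-1,1,2,3::int} \<Longrightarrow> b \<in> B \<Longrightarrow> (a*b) mod int p \<noteq> 0"
  proof
    fix a b assume h1: "a \<in> {-1,1,2,3::int}" and h2: "b \<in> B" and e: "(a*b) mod int p = 0"
    have "\<exists>a \<in> {-1,1,2,3::int}. \<exists>b \<in> B. (a * b) mod int p = 0"
      apply (rule bexI[where x=a])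
       apply (rule bexI[where x=b])
        apply (rule e)
       apply (rule h2)
      apply (rule h1)
      done
    with nz show False by contradiction
  qed
  have i3: "(3*i) mod int p \<noteq> 0" by (rule nz') (simp_all add: assms(5))
  have i2: "(2*i) mod int p \<noteq> 0" by (rule nz') (simp_all add: assms(5))
  have rng: "z mod int p \<in> {1..<int p}" if "z mod int p \<noteq> 0" for z
  proof -
    have "0 \<le> z mod int p" "z mod int p < int p" using p0 by simp_all
    moreover have "1 \<le> z mod int p" using calculation(1) that by linarith
    ultimately show ?thesis by simp
  qed
  have i6: "(6*i) mod int p \<noteq> 0"
  proof
    assume "(6*i) mod int p = 0"
    hence "int p dvd 2 * (3*i)" by (simp add: dvd_eq_mod_eq_0)
    hence "int p dvd 2 \<or> int p dvd 3*i" using pp prime_dvd_mult_iff by blast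
    moreover have "\<not> int p dvd 2" using n2' .
    ultimately show False using i3 by (simp add: dvd_eq_mod_eq_0)
  qed
  obtain ab0 where ab0: "fst ab0 \<in> {-1,1,2,3} \<and> snd ab0 \<in> B \<and> (fst ab0 * snd ab0) mod int p = (6*i) mod int p"
    using uniq rng[OF i6] by (meson ex1_implies_ex)
  define a where "a = fst ab0"
  define b where "b = snd ab0"
  have ab: "a \<in> {-1,1,2,3}" "b \<in> B" "(a*b) mod int p = (6*i) mod int p"
    using ab0 unfolding a_def b_def by auto
  have bR: "b \<in> {0..<int p}" using sub ab(2) by blast
  have u: "\<And>a1 b1 a2 b2 x. x \<in> {1..<int p} \<Longrightarrow> a1 \<in> {-1,1,2,3} \<Longrightarrow> b1 \<in> B \<Longrightarrow> (a1*b1) mod int p = x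
     \<Longrightarrow> a2 \<in> {-1,1,2,3} \<Longrightarrow> b2 \<in> B \<Longrightarrow> (a2*b2) mod int p = x \<Longrightarrow> a1 = a2"
  proof -
    fix a1 b1 a2 b2 x assume h: "x \<in> {1..<int p}" "a1 \<in> {-1,1,2,3::int}" "b1 \<in> B" "(a1*b1) mod int p = x"
      "a2 \<in> {-1,1,2,3::int}" "b2 \<in> B" "(a2*b2) mod int p = x"
    have ex: "\<exists>!ab. fst ab \<in> {-1,1,2,3} \<and> snd ab \<in> B \<and> (fst ab * snd ab) mod int p = x"
      using uniq h(1) by blast
    have "(a1,b1) = (a2,b2)"
      by (rule ex1_uniq[OF ex]) (use h in simp_all)
    then show "a1 = a2" by simp
  qed
  show ?thesis
  proof -
    consider "a = -1" | "a = 1" | "a = 2" | "a = 3" using ab(1) by blast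
    thus ?thesis
    proof cases
      case 1
      have "((-1)*b) mod int p = ((-1)*(-6*i)) mod int p" using ab(3) 1 by simp
      hence "b = (-6*i) mod int p" using cancel_aux[of "-1" p b "-6*i"] bR by simp
      thus ?thesis using ab(2) by simp
    next
      case 2
      have "b = (6*i) mod int p" using ab(3) 2 bR by simp
      thus ?thesis using ab(2) by simp
    next
      case 3
      have "(2*b) mod int p = (2*(3*i)) mod int p" using ab(3) 3 by simp
      hence bb: "b = (3*i) mod int p" using cancel_aux[OF c2] bR by blast
      have "(1*b) mod int p = (3*i) mod int p" using bb by simp
      from u[OF rng[OF i3] _ assms(5) refl _ ab(2) this] show ?thesis by simp
    next
      case 4
      have "(3*b) mod int p = (3*(2*i)) mod int p" using ab(3) 4 by simp
      hence bb: "b = (2*i) mod int p" using cancel_aux[OF c3] bR by blast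
      have "(1*b) mod int p = (2*i) mod int p" using bb by simp
      from u[OF rng[OF i2] _ assms(5) refl _ ab(2) this] show ?thesis by simp
    qed
  qed
qed

end
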